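(* Consider the general binary observation model: a signal $X\in[0,1]^N$ is drawn from a known prior supported on $[\tau_0,\tau_1]^N$ where $0<\tau_0\le\tau_1<1$; conditionally on $X$, the observations $Y_1,\dots,Y_N\in\{0,1\}$ are independent with $\mathbb{E}[Y_i\mid X]=X_i$; and $x\in\mathbb{R}$ is a (square-integrable) scalar function of $X$ to be estimated. Then for every integer $D\ge0$, \[ \mathrm{Corr}_{\le D}^2 \le \sum_{\alpha\in\{0,1\}^N,\ 0\le|\alpha|\le D} \frac{\kappa_\alpha^2}{(\tau_0(1-\tau_1))^{|\alpha|}}, \] where $\kappa_\alpha$ for $\alpha\in\{0,1\}^N$ is defined recursively by $\kappa_\alpha = \mathbb{E}[xX^\alpha] - \sum_{0\le\beta\lneq\alpha}\kappa_\beta\,\mathbb{E}[X^{\alpha-\beta}]$.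
   Context: For $\alpha\in\{0,1\}^N$: $|\alpha|=\sum_i\alpha_i$, $X^\alpha=\prod_i X_i^{\alpha_i}$; $\beta\le\alpha$ is entrywise; $\beta\lneq\alpha$ means $\beta\le\alpha$, $\beta\ne\alpha$. The degree-$D$ maximum correlation is $\mathrm{Corr}_{\le D} = \sup\{\mathbb{E}[f(Y)x]/\sqrt{\mathbb{E}[f(Y)^2]} : f\in\mathbb{R}[Y]_{\le D},\ \mathbb{E}[f(Y)^2]\ne0\}$, where $\mathbb{R}[Y]_{\le D}$ denotes real polynomials of degree at most $D$ in the coordinates of $Y$, expectations under the joint law of $(x,Y)$. *)

theory Defs
  imports "HOL-Probability.Probability"
begin

text \<open>The prior mu is a probability measure on signals
X : nat => real (coordinates 0..N-1).\<close>

definition binary_vectors :: "nat \<Rightarrow> (nat \<Rightarrow> real) set" where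
  "binary_vectors N = PiE {..<N} (\<lambda>_. {0, 1})"

definition bern_lik :: "nat \<Rightarrow> (nat \<Rightarrow> real) \<Rightarrow> (nat \<Rightarrow> real) \<Rightarrow> real" where
  "bern_lik N X y = (\<Prod>i<N. if y i = 1 then X i else 1 - X i)"

definition joint_exp :: "(nat \<Rightarrow> real) measure \<Rightarrow> nat \<Rightarrow>
    ((nat \<Rightarrow> real) \<Rightarrow> (nat \<Rightarrow> real) \<Rightarrow> real) \<Rightarrow> real" where
  "joint_exp mu N h = (\<integral>X. (\<Sum>y\<in>binary_vectors N. bern_lik N X y * h X y) \<partial>mu)"

text \<open>Real polynomials of degree at most D in y_0..y_{N-1}, written out explicitly:
exponent vectors e (zero outside {..<N}) with total degree at most D, coefficients c e.\<close>

definition monomials :: "nat \<Rightarrow> nat \<Rightarrow> (nat \<Rightarrow> nat) set" where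
  "monomials N D = {e. (\<forall>i\<ge>N. e i = 0) \<and> (\<Sum>i<N. e i) \<le> D}"

definition poly_eval :: "nat \<Rightarrow> nat \<Rightarrow> ((nat \<Rightarrow> nat) \<Rightarrow> real) \<Rightarrow> (nat \<Rightarrow> real) \<Rightarrow> real" where
  "poly_eval N D c y = (\<Sum>e\<in>monomials N D. c e * (\<Prod>i<N. y i ^ e i))"

definition corr_le :: "(nat \<Rightarrow> real) measure \<Rightarrow> nat \<Rightarrow> ((nat \<Rightarrow> real) \<Rightarrow> real) \<Rightarrow> nat \<Rightarrow> real" where
  "corr_le mu N g D = Sup
     {joint_exp mu N (\<lambda>X y. poly_eval N D c y * g X)
        / sqrt (joint_exp mu N (\<lambda>X y. (poly_eval N D c y)^2)) | c.
      joint_exp mu N (\<lambda>X y. (poly_eval N D c y)^2) \<noteq> 0}"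

text \<open>The cumulant-like quantities kappa_alpha, with alpha in {0,1}^N identified with
the finite set S = {i. alpha_i = 1}: beta \<le> alpha is T \<subseteq> S, alpha - beta is S - T,
X^alpha is prod_{i in S} X_i, |alpha| = card S.\<close>

function kappa :: "(nat \<Rightarrow> real) measure \<Rightarrow> ((nat \<Rightarrow> real) \<Rightarrow> real) \<Rightarrow> nat set \<Rightarrow> real" where
  "kappa mu g S = (if finite S then
      (\<integral>X. g X * (\<Prod>i\<in>S. X i) \<partial>mu)
      - (\<Sum>T\<in>{T. T \<subset> S}. kappa mu g T * (\<integral>X. (\<Prod>i\<in>S - T. X i) \<partial>mu))
    else 0)"
  by auto
termination
  by (relation "Wellfounded.measure (\<lambda>(mu, g, S). card S)") (auto intro: psubset_card_mono)

end

theory Submission imports Defs begin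

definition Ey :: "nat \<Rightarrow> (nat\<Rightarrow>real) \<Rightarrow> ((nat\<Rightarrow>real)\<Rightarrow>real) \<Rightarrow> real" where
  "Ey N X F = (\<Sum>y\<in>binary_vectors N. bern_lik N X y * F y)"

lemma finite_bv: "finite (binary_vectors N)"
  unfolding binary_vectors_def by (intro finite_PiE) auto

lemma Ey_fact:
  "Ey N X (\<lambda>y. \<Prod>i<N. h i (y i)) = (\<Prod>i<N. (1 - X i) * h i 0 + X i * h i 1)"
proof -
  have "(\<Prod>i<N. (1 - X i) * h i 0 + X i * h i 1)
      = (\<Prod>i<N. \<Sum>t\<in>{0,1::real}. (if t = 1 then X i else 1 - X i) * h i t)"
    by (intro prod.cong) auto
  also have "\<dots> = (\<Sum>y\<in>binary_vectors N. \<Prod>i<N. (if y i = 1 then X i else 1 - X i) * h i (y i))"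
    unfolding binary_vectors_def by (subst prod_sum_PiE) auto
  also have "\<dots> = Ey N X (\<lambda>y. \<Prod>i<N. h i (y i))"
    unfolding Ey_def bern_lik_def by (simp add: prod.distrib)
  finally show ?thesis by simp
qed

lemma Ey_lin_sum: "finite A \<Longrightarrow> Ey N X (\<lambda>y. \<Sum>a\<in>A. F a y) = (\<Sum>a\<in>A. Ey N X (F a))"
  unfolding Ey_def by (simp add: sum_distrib_left sum.swap[of _ A])

lemma Ey_cmult: "Ey N X (\<lambda>y. c * F y) = c * Ey N X F"
  unfolding Ey_def by (simp add: sum_distrib_left ac_simps)

definition ev :: "nat \<Rightarrow> (nat set \<Rightarrow> real) \<Rightarrow> (nat \<Rightarrow> real) \<Rightarrow> real" where
  "ev N a z = (\<Sum>S\<in>Pow {..<N}. a S * (\<Prod>i\<in>S. z i))"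

lemma Ey_mono: assumes "S \<subseteq> {..<N}" shows "Ey N X (\<lambda>y. \<Prod>i\<in>S. y i) = (\<Prod>i\<in>S. X i)"
proof -
  have "Ey N X (\<lambda>y. \<Prod>i\<in>S. y i) = Ey N X (\<lambda>y. \<Prod>i<N. (\<lambda>i t. if i \<in> S then t else 1) i (y i))"
    using assms by (simp add: prod.If_cases Int_absorb1 Int_absorb2)
  also have "\<dots> = (\<Prod>i<N. if i \<in> S then X i else 1)"
    by (subst Ey_fact) (intro prod.cong, auto)
  also have "\<dots> = (\<Prod>i\<in>S. X i)" using assms by (simp add: prod.If_cases Int_absorb1 Int_absorb2)
  finally show ?thesis .
qed

lemma Ey_ev: "Ey N X (ev N a) = ev N a X"
  unfolding ev_def
  by (subst Ey_lin_sum) (auto simp: Ey_cmult Ey_mono)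

definition dd :: "nat \<Rightarrow> (nat set\<Rightarrow>real) \<Rightarrow> (nat\<Rightarrow>real) \<Rightarrow> nat set \<Rightarrow> real" where
  "dd N a X T = (\<Sum>S\<in>{S\<in>Pow {..<N}. T \<subseteq> S}. a S * (\<Prod>i\<in>S-T. X i))"

lemma ev_expand:
  "ev N a y = (\<Sum>T\<in>Pow {..<N}. dd N a X T * (\<Prod>i\<in>T. y i - X i))"
proof -
  have "ev N a y = (\<Sum>S\<in>Pow {..<N}. a S * (\<Prod>i\<in>S. (y i - X i) + X i))"
    unfolding ev_def by simp
  also have "\<dots> = (\<Sum>S\<in>Pow {..<N}. \<Sum>T\<in>{T\<in>Pow {..<N}. T \<subseteq> S}.
        a S * ((\<Prod>i\<in>T. y i - X i) * (\<Prod>i\<in>S-T. X i)))"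
  proof (intro sum.cong refl)
    fix S assume S: "S \<in> Pow {..<N}"
    hence fin: "finite S" by (auto intro: finite_subset)
    have "Pow S = {T\<in>Pow {..<N}. T \<subseteq> S}" using S by auto
    thus "a S * (\<Prod>i\<in>S. (y i - X i) + X i) = (\<Sum>T\<in>{T\<in>Pow {..<N}. T \<subseteq> S}.
        a S * ((\<Prod>i\<in>T. y i - X i) * (\<Prod>i\<in>S-T. X i)))"
      using prod_add[OF fin, of "\<lambda>i. y i - X i" X] by (simp add: sum_distrib_left)
  qed
  also have "\<dots> = (\<Sum>T\<in>Pow {..<N}. \<Sum>S\<in>{S\<in>Pow {..<N}. T \<subseteq> S}.
        a S * ((\<Prod>i\<in>T. y i - X i) * (\<Prod>i\<in>S-T. X i)))"
    by (rule sum.swap_restrict) auto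
  also have "\<dots> = (\<Sum>T\<in>Pow {..<N}. dd N a X T * (\<Prod>i\<in>T. y i - X i))"
    unfolding dd_def sum_distrib_right by (intro sum.cong refl) (simp add: ac_simps)
  finally show ?thesis .
qed

lemma Ey_orth:
  assumes T: "T \<subseteq> {..<N}" and U: "U \<subseteq> {..<N}"
  shows "Ey N X (\<lambda>y. (\<Prod>i\<in>T. y i - X i) * (\<Prod>i\<in>U. y i - X i))
     = (if T = U then (\<Prod>i\<in>T. X i * (1 - X i)) else 0)"
proof -
  define h where "h i t = (if i \<in> T then t - X i else 1) * (if i \<in> U then t - X i else 1)" for i t
  have "Ey N X (\<lambda>y. (\<Prod>i\<in>T. y i - X i) * (\<Prod>i\<in>U. y i - X i)) = Ey N X (\<lambda>y. \<Prod>i<N. h i (y i))"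
    unfolding h_def prod.distrib using T U
    by (simp add: prod.If_cases Int_absorb1 Int_absorb2)
  also have "\<dots> = (\<Prod>i<N. (1 - X i) * h i 0 + X i * h i 1)" by (rule Ey_fact)
  also have "\<dots> = (\<Prod>i<N. if i \<in> T \<and> i \<in> U then X i * (1 - X i) else if i \<in> T \<or> i \<in> U then 0 else 1)"
    by (intro prod.cong refl) (auto simp: h_def algebra_simps power2_eq_square)
  also have "\<dots> = (if T = U then (\<Prod>i\<in>T. X i * (1 - X i)) else 0)"
  proof (cases "T = U")
    case True
    then show ?thesis using T by (simp add: prod.If_cases Int_absorb1 Int_absorb2)
  next
    case False
    then obtain i where "i \<in> T \<and> i \<notin> U \<or> i \<in> U \<and> i \<notin> T" by blast
    moreover have "i < N" using calculation T U by auto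
    ultimately show ?thesis using False
      by (subst prod_zero) (auto intro!: bexI[of _ i])
  qed
  finally show ?thesis .
qed

lemma Ey_sq:
  "Ey N X (\<lambda>y. (ev N a y)^2) = (\<Sum>T\<in>Pow {..<N}. (dd N a X T)^2 * (\<Prod>i\<in>T. X i * (1 - X i)))"
proof -
  let ?P = "Pow {..<N}"
  let ?p = "\<lambda>T y. \<Prod>i\<in>T. y i - X i"
  have "Ey N X (\<lambda>y. (ev N a y)^2) = Ey N X (\<lambda>y. \<Sum>T\<in>?P. \<Sum>U\<in>?P. dd N a X T * dd N a X U * (?p T y * ?p U y))"
    by (simp add: ev_expand[of N a _ X] power2_eq_square sum_product ac_simps)
  also have "\<dots> = (\<Sum>T\<in>?P. \<Sum>U\<in>?P. dd N a X T * dd N a X U * Ey N X (\<lambda>y. ?p T y * ?p U y))"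
    by (simp add: Ey_lin_sum Ey_cmult)
  also have "\<dots> = (\<Sum>T\<in>?P. \<Sum>U\<in>?P. if T = U then dd N a X T * dd N a X U * (\<Prod>i\<in>T. X i * (1 - X i)) else 0)"
    by (intro sum.cong refl) (simp add: Ey_orth)
  also have "\<dots> = (\<Sum>T\<in>?P. (dd N a X T)^2 * (\<Prod>i\<in>T. X i * (1 - X i)))"
    by (simp add: power2_eq_square)
  finally show ?thesis .
qed

definition supp :: "nat \<Rightarrow> (nat \<Rightarrow> nat) \<Rightarrow> nat set" where
  "supp N e = {i. i < N \<and> e i \<noteq> 0}"

definition coef :: "nat \<Rightarrow> nat \<Rightarrow> ((nat \<Rightarrow> nat) \<Rightarrow> real) \<Rightarrow> nat set \<Rightarrow> real" where
  "coef N D c S = (\<Sum>e\<in>{e. e \<in> monomials N D \<and> supp N e = S}. c e)"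

lemma finite_monomials: "finite (monomials N D)"
proof (rule finite_subset)
  show "monomials N D \<subseteq> {e. \<forall>x. (x \<in> {..<N} \<longrightarrow> e x \<in> {..D}) \<and> (x \<notin> {..<N} \<longrightarrow> e x = 0)}"
  proof (intro subsetI CollectI allI conjI impI)
    fix e x assume e: "e \<in> monomials N D" and x: "x \<in> {..<N}"
    have "e x \<le> (\<Sum>i<N. e i)" using x by (intro member_le_sum) auto
    thus "e x \<in> {..D}" using e by (auto simp: monomials_def)
  next
    fix e x assume "e \<in> monomials N D" "x \<notin> {..<N}"
    thus "e x = 0" by (auto simp: monomials_def)
  qed
qed (rule finite_set_of_finite_funs, auto)

lemma mono_binary:
  assumes y: "y \<in> binary_vectors N"
  shows "(\<Prod>i<N. y i ^ e i) = (\<Prod>i\<in>supp N e. y i)"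
proof -
  have "(\<Prod>i<N. y i ^ e i) = (\<Prod>i<N. if e i \<noteq> 0 then y i else 1)"
  proof (intro prod.cong refl)
    fix i assume "i \<in> {..<N}"
    hence "y i = 0 \<or> y i = 1" using y by (auto simp: binary_vectors_def)
    thus "y i ^ e i = (if e i \<noteq> 0 then y i else 1)" by auto
  qed
  also have "\<dots> = (\<Prod>i\<in>supp N e. y i)"
    unfolding supp_def using prod.inter_filter[of "{..<N}" y "\<lambda>i. e i \<noteq> 0"]
    by (simp add: lessThan_def)
  finally show ?thesis .
qed

lemma poly_eval_ev:
  assumes y: "y \<in> binary_vectors N"
  shows "poly_eval N D c y = ev N (coef N D c) y"
proof -
  have "poly_eval N D c y = (\<Sum>e\<in>monomials N D. c e * (\<Prod>i\<in>supp N e. y i))"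
    unfolding poly_eval_def using mono_binary[OF y] by simp
  also have "\<dots> = (\<Sum>S\<in>Pow {..<N}. \<Sum>e\<in>{e. e \<in> monomials N D \<and> supp N e = S}. c e * (\<Prod>i\<in>supp N e. y i))"
    by (rule sum.group[symmetric]) (auto simp: finite_monomials supp_def)
  also have "\<dots> = ev N (coef N D c) y"
    unfolding ev_def coef_def sum_distrib_right by (intro sum.cong refl) auto
  finally show ?thesis .
qed

lemma coef_zero:
  assumes "D < card S"
  shows "coef N D c S = 0"
proof -
  have "{e. e \<in> monomials N D \<and> supp N e = S} = {}"
  proof safe
    fix e assume e: "e \<in> monomials N D" and s: "S = supp N e"
    have "card (supp N e) = (\<Sum>i\<in>supp N e. 1)" by simp
    also have "\<dots> \<le> (\<Sum>i\<in>supp N e. e i)" by (intro sum_mono) (auto simp: supp_def)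
    also have "\<dots> \<le> (\<Sum>i<N. e i)" by (intro sum_mono2) (auto simp: supp_def)
    also have "\<dots> \<le> D" using e by (simp add: monomials_def)
    finally show "e \<in> {}" using assms s by simp
  qed
  thus ?thesis unfolding coef_def by (simp only: sum.empty)
qed

lemma dd_zero:
  assumes "\<And>S. D < card S \<Longrightarrow> a S = 0" and "D < card T" and "T \<subseteq> {..<N}"
  shows "dd N a X T = 0"
proof -
  have "a S = 0" if "S \<subseteq> {..<N}" "T \<subseteq> S" for S
  proof -
    have "card T \<le> card S" using that by (intro card_mono) (auto intro: finite_subset)
    thus ?thesis using assms by auto
  qed
  thus ?thesis unfolding dd_def by (intro sum.neutral) auto
qed

locale setting = prob_space mu for mu :: "(nat\<Rightarrow>real) measure" +
  fixes N :: nat and tau0 tau1 :: real and g :: "(nat\<Rightarrow>real) \<Rightarrow> real"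
  assumes sets_eq: "sets mu = sets (PiM {..<N} (\<lambda>_. borel))"
  and t0: "0 < tau0" and t01: "tau0 \<le> tau1" and t1: "tau1 < 1"
  and AEb: "AE X in mu. \<forall>i<N. tau0 \<le> X i \<and> X i \<le> tau1"
  and gm: "g \<in> borel_measurable mu" and g2: "integrable mu (\<lambda>X. (g X)^2)"
begin

definition bm :: "((nat\<Rightarrow>real) \<Rightarrow> real) \<Rightarrow> bool" where
  "bm f \<longleftrightarrow> f \<in> borel_measurable mu \<and> (\<exists>B. AE X in mu. \<bar>f X\<bar> \<le> B)"

lemma bm_comp: assumes "i < N" shows "bm (\<lambda>X. X i)"
proof -
  have "(\<lambda>X. X i) \<in> borel_measurable (PiM {..<N} (\<lambda>_. borel))"
    using assms by (intro measurable_component_singleton) simp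
  moreover have eq: "(borel_measurable mu :: ((nat\<Rightarrow>real)\<Rightarrow>real) set) = borel_measurable (PiM {..<N} (\<lambda>_. borel))"
    by (rule measurable_cong_sets[OF sets_eq refl])
  ultimately have m: "(\<lambda>X. X i) \<in> borel_measurable mu" by simp
  have "AE X in mu. \<bar>X i\<bar> \<le> 1" using AEb
    by eventually_elim (use assms t0 t1 in auto)
  thus ?thesis using m unfolding bm_def by blast
qed

lemma bm_const: "bm (\<lambda>X. c)"
  unfolding bm_def by (auto intro: exI[of _ "\<bar>c\<bar>"])

lemma bm_add: assumes "bm f" "bm h" shows "bm (\<lambda>X. f X + h X)"
proof -
  obtain B1 B2 where "AE X in mu. \<bar>f X\<bar> \<le> B1" "AE X in mu. \<bar>h X\<bar> \<le> B2"
    using assms unfolding bm_def by blast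
  hence "AE X in mu. \<bar>f X + h X\<bar> \<le> B1 + B2" by eventually_elim auto
  thus ?thesis using assms unfolding bm_def by auto
qed

lemma bm_mult: assumes "bm f" "bm h" shows "bm (\<lambda>X. f X * h X)"
proof -
  obtain B1 B2 where "AE X in mu. \<bar>f X\<bar> \<le> B1" "AE X in mu. \<bar>h X\<bar> \<le> B2"
    using assms unfolding bm_def by blast
  hence "AE X in mu. \<bar>f X * h X\<bar> \<le> B1 * B2"
    by eventually_elim (auto simp: abs_mult intro!: mult_mono)
  thus ?thesis using assms unfolding bm_def by auto
qed

lemma bm_diff: assumes "bm f" "bm h" shows "bm (\<lambda>X. f X - h X)"
proof -
  obtain B1 B2 where "AE X in mu. \<bar>f X\<bar> \<le> B1" "AE X in mu. \<bar>h X\<bar> \<le> B2"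
    using assms unfolding bm_def by blast
  hence "AE X in mu. \<bar>f X - h X\<bar> \<le> B1 + B2" by eventually_elim auto
  thus ?thesis using assms unfolding bm_def by auto
qed

lemma bm_sq: "bm f \<Longrightarrow> bm (\<lambda>X. (f X)^2)"
  unfolding power2_eq_square by (rule bm_mult)

lemma bm_sum: "finite A \<Longrightarrow> (\<And>i. i \<in> A \<Longrightarrow> bm (f i)) \<Longrightarrow> bm (\<lambda>X. \<Sum>i\<in>A. f i X)"
  by (induction A rule: finite_induct) (auto intro: bm_add bm_const)

lemma bm_prod: "finite A \<Longrightarrow> (\<And>i. i \<in> A \<Longrightarrow> bm (f i)) \<Longrightarrow> bm (\<lambda>X. \<Prod>i\<in>A. f i X)"
  by (induction A rule: finite_induct) (auto intro: bm_mult bm_const)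

lemma bm_int: assumes "bm f" shows "integrable mu f"
proof -
  obtain B where B: "AE X in mu. \<bar>f X\<bar> \<le> B" and m: "f \<in> borel_measurable mu"
    using assms unfolding bm_def by blast
  show ?thesis by (rule integrable_const_bound[of f B]) (use B m in auto)
qed

lemma g_int: "integrable mu g"
  by (rule square_integrable_imp_integrable[OF gm g2])

lemma bm_g: assumes "bm f" shows "integrable mu (\<lambda>X. g X * f X)"
proof -
  obtain B where B: "AE X in mu. \<bar>f X\<bar> \<le> B" using assms unfolding bm_def by blast
  show ?thesis
  proof (rule Bochner_Integration.integrable_bound)
    show "integrable mu (\<lambda>X. B * g X)" using g_int by simp
    show "(\<lambda>X. g X * f X) \<in> borel_measurable mu" using assms gm unfolding bm_def by (auto intro!: borel_measurable_times)
    show "AE X in mu. norm (g X * f X) \<le> norm (B * g X)" using B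
    proof eventually_elim
      fix X assume "\<bar>f X\<bar> \<le> B"
      hence "\<bar>f X\<bar> \<le> \<bar>B\<bar>" by simp
      hence "\<bar>g X\<bar> * \<bar>f X\<bar> \<le> \<bar>g X\<bar> * \<bar>B\<bar>" by (simp add: mult_left_mono)
      thus "norm (g X * f X) \<le> norm (B * g X)" by (simp add: abs_mult mult.commute)
    qed
  qed
qed

lemma bm_mono: "S \<subseteq> {..<N} \<Longrightarrow> bm (\<lambda>X. \<Prod>i\<in>S. X i)"
  by (intro bm_prod) (auto intro: finite_subset bm_comp)

lemma bm_v: assumes "T \<subseteq> {..<N}" shows "bm (\<lambda>X. \<Prod>i\<in>T. X i * (1 - X i))"
proof (rule bm_prod)
  show "finite T" using assms by (auto intro: finite_subset)
  fix i assume "i \<in> T"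
  hence i: "i < N" using assms by auto
  show "bm (\<lambda>X. X i * (1 - X i))" by (rule bm_mult[OF bm_comp[OF i] bm_diff[OF bm_const bm_comp[OF i]]])
qed

lemma bm_dd: "bm (\<lambda>X. dd N a X T)"
  unfolding dd_def by (intro bm_sum bm_mult bm_const bm_mono) auto

lemma kappa_rec:
  assumes "finite S"
  shows "(\<integral>X. g X * (\<Prod>i\<in>S. X i) \<partial>mu) = (\<Sum>T\<in>Pow S. kappa mu g T * (\<integral>X. (\<Prod>i\<in>S - T. X i) \<partial>mu))"
proof -
  have P: "Pow S = insert S {T. T \<subset> S}" by auto
  have fin: "finite {T. T \<subset> S}" using assms by (auto intro: finite_subset[of _ "Pow S"])
  show ?thesis
    unfolding P using fin
    by (subst sum.insert) (auto simp: kappa.simps[of mu g S] assms prob_space)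
qed

end


lemma cs_weighted:
  fixes x y p :: "'a \<Rightarrow> real"
  assumes "\<And>i. i \<in> A \<Longrightarrow> p i > 0"
  shows "(\<Sum>i\<in>A. x i * y i)^2 \<le> (\<Sum>i\<in>A. (x i)^2 / p i) * (\<Sum>i\<in>A. p i * (y i)^2)"
proof -
  have "(\<Sum>i\<in>A. x i * y i) = (\<Sum>i\<in>A. (x i / sqrt (p i)) * (y i * sqrt (p i)))"
  proof (intro sum.cong refl)
    fix i assume "i \<in> A"
    hence "sqrt (p i) \<noteq> 0" using assms by fastforce
    thus "x i * y i = (x i / sqrt (p i)) * (y i * sqrt (p i))" by (simp add: field_simps)
  qed
  moreover have "(\<Sum>i\<in>A. (x i)^2 / p i) = (\<Sum>i\<in>A. (x i / sqrt (p i))^2)"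
    using assms by (intro sum.cong refl) (simp add: power_divide less_imp_le)
  moreover have "(\<Sum>i\<in>A. p i * (y i)^2) = (\<Sum>i\<in>A. (y i * sqrt (p i))^2)"
    using assms by (intro sum.cong refl) (simp add: power_mult_distrib less_imp_le)
  moreover have "(\<Sum>i\<in>A. (x i / sqrt (p i)) * (y i * sqrt (p i)))^2 \<le>
     (\<Sum>i\<in>A. (x i / sqrt (p i))^2) * (\<Sum>i\<in>A. (y i * sqrt (p i))^2)"
    by (rule Cauchy_Schwarz_ineq_sum)
  ultimately show ?thesis by (simp only:)
qed

context setting begin

definition mm :: "nat set \<Rightarrow> real" where "mm U = (\<integral>X. (\<Prod>i\<in>U. X i) \<partial>mu)"

definition cc :: "(nat set \<Rightarrow> real) \<Rightarrow> nat set \<Rightarrow> real" where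
  "cc a T = (\<Sum>S\<in>{S\<in>Pow {..<N}. T \<subseteq> S}. a S * mm (S - T))"

lemma joint_sq:
  "joint_exp mu N (\<lambda>X y. (poly_eval N D c y)^2) =
    (\<integral>X. (\<Sum>T\<in>Pow {..<N}. (dd N (coef N D c) X T)^2 * (\<Prod>i\<in>T. X i * (1 - X i))) \<partial>mu)"
  unfolding joint_exp_def
proof (intro Bochner_Integration.integral_cong refl)
  fix X
  have "(\<Sum>y\<in>binary_vectors N. bern_lik N X y * (poly_eval N D c y)\<^sup>2) = Ey N X (\<lambda>y. (ev N (coef N D c) y)^2)"
    unfolding Ey_def by (intro sum.cong refl) (simp add: poly_eval_ev)
  thus "(\<Sum>y\<in>binary_vectors N. bern_lik N X y * (poly_eval N D c y)\<^sup>2) =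
    (\<Sum>T\<in>Pow {..<N}. (dd N (coef N D c) X T)\<^sup>2 * (\<Prod>i\<in>T. X i * (1 - X i)))"
    by (simp add: Ey_sq)
qed

lemma joint_g:
  "joint_exp mu N (\<lambda>X y. poly_eval N D c y * g X) =
    (\<Sum>S\<in>Pow {..<N}. coef N D c S * (\<integral>X. g X * (\<Prod>i\<in>S. X i) \<partial>mu))"
proof -
  have "joint_exp mu N (\<lambda>X y. poly_eval N D c y * g X) =
      (\<integral>X. (\<Sum>S\<in>Pow {..<N}. coef N D c S * (g X * (\<Prod>i\<in>S. X i))) \<partial>mu)"
    unfolding joint_exp_def
  proof (intro Bochner_Integration.integral_cong refl)
    fix X
    have "(\<Sum>y\<in>binary_vectors N. bern_lik N X y * (poly_eval N D c y * g X)) =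
       g X * Ey N X (ev N (coef N D c))"
      unfolding Ey_def sum_distrib_left by (intro sum.cong refl) (simp add: poly_eval_ev)
    also have "\<dots> = (\<Sum>S\<in>Pow {..<N}. coef N D c S * (g X * (\<Prod>i\<in>S. X i)))"
      by (simp add: Ey_ev ev_def sum_distrib_left ac_simps)
    finally show "(\<Sum>y\<in>binary_vectors N. bern_lik N X y * (poly_eval N D c y * g X)) =
       (\<Sum>S\<in>Pow {..<N}. coef N D c S * (g X * (\<Prod>i\<in>S. X i)))" .
  qed
  also have "\<dots> = (\<Sum>S\<in>Pow {..<N}. (\<integral>X. coef N D c S * (g X * (\<Prod>i\<in>S. X i)) \<partial>mu))"
    by (rule Bochner_Integration.integral_sum) (rule integrable_mult_right[OF bm_g[OF bm_mono]]; auto)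
  also have "\<dots> = (\<Sum>S\<in>Pow {..<N}. coef N D c S * (\<integral>X. g X * (\<Prod>i\<in>S. X i) \<partial>mu))"
    by simp
  finally show ?thesis .
qed

lemma jensen: assumes "bm f" shows "(\<integral>X. f X \<partial>mu)^2 \<le> (\<integral>X. (f X)^2 \<partial>mu)"
proof -
  have "integrable mu (\<lambda>X. (f X)^2)" unfolding power2_eq_square
    by (intro bm_int bm_mult assms)
  thus ?thesis using variance_positive[of f] variance_eq[of f] bm_int[OF assms] by simp
qed

lemma int_dd: "(\<integral>X. dd N a X T \<partial>mu) = cc a T"
proof -
  have "(\<integral>X. dd N a X T \<partial>mu) = (\<Sum>S\<in>{S\<in>Pow {..<N}. T \<subseteq> S}. \<integral>X. a S * (\<Prod>i\<in>S-T. X i) \<partial>mu)"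
    unfolding dd_def by (rule Bochner_Integration.integral_sum) (rule integrable_mult_right[OF bm_int[OF bm_mono]]; auto)
  thus ?thesis by (simp add: cc_def mm_def)
qed

lemma lower:
  "(\<Sum>T\<in>{S. S \<subseteq> {..<N} \<and> card S \<le> D}. (tau0 * (1 - tau1))^card T * (cc a T)^2)
   \<le> (\<integral>X. (\<Sum>T\<in>Pow {..<N}. (dd N a X T)^2 * (\<Prod>i\<in>T. X i * (1 - X i))) \<partial>mu)"
proof -
  let ?K = "{S. S \<subseteq> {..<N} \<and> card S \<le> D}"
  let ?w = "tau0 * (1 - tau1)"
  have w0: "0 \<le> ?w" using t0 t1 by simp
  have finK: "finite ?K" by (rule finite_subset[of _ "Pow {..<N}"]) auto
  have "(\<Sum>T\<in>?K. ?w^card T * (cc a T)^2) \<le> (\<Sum>T\<in>?K. ?w^card T * (\<integral>X. (dd N a X T)^2 \<partial>mu))"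
  proof (rule sum_mono)
    fix T
    have "(cc a T)^2 \<le> (\<integral>X. (dd N a X T)^2 \<partial>mu)"
      using jensen[OF bm_dd, of a T] by (simp add: int_dd)
    thus "?w^card T * (cc a T)^2 \<le> ?w^card T * (\<integral>X. (dd N a X T)^2 \<partial>mu)"
      using w0 by (intro mult_left_mono) auto
  qed
  also have "\<dots> = (\<integral>X. (\<Sum>T\<in>?K. ?w^card T * (dd N a X T)^2) \<partial>mu)"
    by (subst Bochner_Integration.integral_sum) (rule integrable_mult_right[OF bm_int[OF bm_sq[OF bm_dd]]], simp)
  also have "\<dots> \<le> (\<integral>X. (\<Sum>T\<in>Pow {..<N}. (dd N a X T)^2 * (\<Prod>i\<in>T. X i * (1 - X i))) \<partial>mu)"
  proof (rule integral_mono_AE)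
    show "integrable mu (\<lambda>X. \<Sum>T\<in>?K. ?w^card T * (dd N a X T)^2)"
      using finK by (intro bm_int bm_sum) (auto intro: bm_mult[OF bm_const bm_sq[OF bm_dd]])
    show "integrable mu (\<lambda>X. \<Sum>T\<in>Pow {..<N}. (dd N a X T)^2 * (\<Prod>i\<in>T. X i * (1 - X i)))"
      by (intro bm_int bm_sum) (auto intro: bm_mult[OF bm_sq[OF bm_dd] bm_v])
    show "AE X in mu. (\<Sum>T\<in>?K. ?w^card T * (dd N a X T)^2)
        \<le> (\<Sum>T\<in>Pow {..<N}. (dd N a X T)^2 * (\<Prod>i\<in>T. X i * (1 - X i)))"
      using AEb
    proof eventually_elim
      fix X assume X: "\<forall>i<N. tau0 \<le> X i \<and> X i \<le> tau1"
      have "(\<Sum>T\<in>?K. ?w^card T * (dd N a X T)^2) \<le> (\<Sum>T\<in>Pow {..<N}. ?w^card T * (dd N a X T)^2)"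
        using w0 by (intro sum_mono2) auto
      also have "\<dots> \<le> (\<Sum>T\<in>Pow {..<N}. (dd N a X T)^2 * (\<Prod>i\<in>T. X i * (1 - X i)))"
      proof (intro sum_mono)
        fix T assume T: "T \<in> Pow {..<N}"
        have "?w^card T = (\<Prod>i\<in>T. ?w)" by simp
        also have "\<dots> \<le> (\<Prod>i\<in>T. X i * (1 - X i))"
        proof (intro prod_mono conjI)
          fix i assume "i \<in> T"
          hence "tau0 \<le> X i" "X i \<le> tau1" using X T by auto
          thus "0 \<le> ?w" "?w \<le> X i * (1 - X i)" using w0 t0 t1 by (auto intro!: mult_mono)
        qed
        finally show "?w^card T * (dd N a X T)^2 \<le> (dd N a X T)^2 * (\<Prod>i\<in>T. X i * (1 - X i))"
          by (metis mult.commute mult_left_mono zero_le_power2)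
      qed
      finally show "(\<Sum>T\<in>?K. ?w^card T * (dd N a X T)^2)
        \<le> (\<Sum>T\<in>Pow {..<N}. (dd N a X T)^2 * (\<Prod>i\<in>T. X i * (1 - X i)))" .
    qed
  qed
  finally show ?thesis .
qed

end


context setting begin

lemma cc_zero:
  assumes az: "\<And>S. D < card S \<Longrightarrow> a S = 0" and T: "D < card T"
  shows "cc a T = 0"
proof -
  have "a S = 0" if "S \<subseteq> {..<N}" "T \<subseteq> S" for S
  proof -
    have "card T \<le> card S" using that by (intro card_mono) (auto intro: finite_subset)
    thus ?thesis using az T by auto
  qed
  thus ?thesis unfolding cc_def by (intro sum.neutral) auto
qed

lemma upper_eq:
  assumes az: "\<And>S. D < card S \<Longrightarrow> a S = 0"
  shows "(\<Sum>S\<in>Pow {..<N}. a S * (\<integral>X. g X * (\<Prod>i\<in>S. X i) \<partial>mu))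
     = (\<Sum>T\<in>{S. S \<subseteq> {..<N} \<and> card S \<le> D}. kappa mu g T * cc a T)"
proof -
  have "(\<Sum>S\<in>Pow {..<N}. a S * (\<integral>X. g X * (\<Prod>i\<in>S. X i) \<partial>mu))
      = (\<Sum>S\<in>Pow {..<N}. \<Sum>T\<in>{T\<in>Pow {..<N}. T \<subseteq> S}. a S * (kappa mu g T * mm (S - T)))"
  proof (intro sum.cong refl)
    fix S assume S: "S \<in> Pow {..<N}"
    hence fin: "finite S" by (auto intro: finite_subset)
    have P: "Pow S = {T\<in>Pow {..<N}. T \<subseteq> S}" using S by auto
    show "a S * (\<integral>X. g X * (\<Prod>i\<in>S. X i) \<partial>mu) = (\<Sum>T\<in>{T\<in>Pow {..<N}. T \<subseteq> S}. a S * (kappa mu g T * mm (S - T)))"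
      unfolding kappa_rec[OF fin] P[symmetric] mm_def by (simp add: sum_distrib_left)
  qed
  also have "\<dots> = (\<Sum>T\<in>Pow {..<N}. \<Sum>S\<in>{S\<in>Pow {..<N}. T \<subseteq> S}. a S * (kappa mu g T * mm (S - T)))"
    by (rule sum.swap_restrict) auto
  also have "\<dots> = (\<Sum>T\<in>Pow {..<N}. kappa mu g T * cc a T)"
    unfolding cc_def sum_distrib_left by (intro sum.cong refl) (simp add: ac_simps)
  also have "\<dots> = (\<Sum>T\<in>{S. S \<subseteq> {..<N} \<and> card S \<le> D}. kappa mu g T * cc a T)"
    by (rule sum.mono_neutral_right) (auto simp del: kappa.simps simp: cc_zero[OF az] not_le)
  finally show ?thesis .
qed

lemma main_c:
  shows "(joint_exp mu N (\<lambda>X y. poly_eval N D c y * g X))^2 \<le>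
     (\<Sum>S\<in>{S. S \<subseteq> {..<N} \<and> card S \<le> D}. (kappa mu g S)^2 / (tau0 * (1 - tau1)) ^ card S)
     * joint_exp mu N (\<lambda>X y. (poly_eval N D c y)^2)"
    and "0 \<le> joint_exp mu N (\<lambda>X y. (poly_eval N D c y)^2)"
proof -
  let ?K = "{S. S \<subseteq> {..<N} \<and> card S \<le> D}"
  let ?w = "tau0 * (1 - tau1)"
  let ?a = "coef N D c"
  let ?R = "(\<Sum>S\<in>?K. (kappa mu g S)^2 / ?w ^ card S)"
  let ?Q = "(\<Sum>T\<in>?K. ?w^card T * (cc ?a T)^2)"
  let ?V = "joint_exp mu N (\<lambda>X y. (poly_eval N D c y)^2)"
  let ?F = "joint_exp mu N (\<lambda>X y. poly_eval N D c y * g X)"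
  have wp: "0 < ?w" using t0 t1 by simp
  have az: "\<And>S. D < card S \<Longrightarrow> ?a S = 0" by (rule coef_zero)
  have VQ: "?Q \<le> ?V" unfolding joint_sq by (rule lower)
  have Q0: "0 \<le> ?Q" using wp by (intro sum_nonneg) simp
  have R0: "0 \<le> ?R" by (intro sum_nonneg) (simp add: wp less_imp_le)
  have F: "?F = (\<Sum>T\<in>?K. kappa mu g T * cc ?a T)"
    unfolding joint_g by (rule upper_eq[OF az])
  have "?F^2 \<le> ?R * ?Q" unfolding F
    by (rule cs_weighted) (simp add: wp)
  also have "\<dots> \<le> ?R * ?V" using R0 VQ by (rule mult_left_mono[rotated])
  finally show "?F^2 \<le> ?R * ?V" .
  show "0 \<le> ?V" using Q0 VQ by simp
qed

end


lemma poly_eval_one: "poly_eval N D (\<lambda>e. if e = (\<lambda>_. 0) then 1 else 0) y = 1"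
proof -
  have z: "(\<lambda>_. 0) \<in> monomials N D" by (simp add: monomials_def)
  have "poly_eval N D (\<lambda>e. if e = (\<lambda>_. 0) then 1 else 0) y
     = (\<Sum>e\<in>monomials N D. if e = (\<lambda>_. 0) then (\<Prod>i<N. y i ^ e i) else 0)"
    unfolding poly_eval_def by (intro sum.cong refl) auto
  also have "\<dots> = 1" using z by (simp add: finite_monomials)
  finally show ?thesis .
qed

lemma bern_sum: "(\<Sum>y\<in>binary_vectors N. bern_lik N X y) = 1"
proof -
  have "Ey N X (\<lambda>y. \<Prod>i<N. (\<lambda>i t. 1::real) i (y i)) = 1" by (subst Ey_fact) simp
  thus ?thesis by (simp add: Ey_def)
qed

theorem mainTheorem3:
  fixes mu :: "(nat \<Rightarrow> real) measure" and N D :: nat and tau0 tau1 :: real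
    and g :: "(nat \<Rightarrow> real) \<Rightarrow> real"
  assumes "prob_space mu"
    and "sets mu = sets (PiM {..<N} (\<lambda>_. borel))"
    and "0 < tau0" and "tau0 \<le> tau1" and "tau1 < 1"
    and "AE X in mu. \<forall>i<N. tau0 \<le> X i \<and> X i \<le> tau1"
    and "g \<in> borel_measurable mu"
    and "integrable mu (\<lambda>X. (g X)^2)"
  shows "(corr_le mu N g D)^2 \<le>
    (\<Sum>S\<in>{S. S \<subseteq> {..<N} \<and> card S \<le> D}.
       (kappa mu g S)^2 / (tau0 * (1 - tau1)) ^ card S)"
proof -
  interpret setting mu N tau0 tau1 g
    using assms unfolding setting_def setting_axioms_def by auto
  define R where "R = (\<Sum>S\<in>{S. S \<subseteq> {..<N} \<and> card S \<le> D}.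
       (kappa mu g S)^2 / (tau0 * (1 - tau1)) ^ card S)"
  define V where "V c = joint_exp mu N (\<lambda>X y. (poly_eval N D c y)^2)" for c
  define F where "F c = joint_exp mu N (\<lambda>X y. poly_eval N D c y * g X)" for c
  define A where "A = {F c / sqrt (V c) | c. V c \<noteq> 0}"
  have corr: "corr_le mu N g D = Sup A"
    unfolding corr_le_def A_def F_def V_def ..
  have sq: "r^2 \<le> R" if "r \<in> A" for r
  proof -
    obtain c where r: "r = F c / sqrt (V c)" and V0: "V c \<noteq> 0" using \<open>r \<in> A\<close> A_def by blast
    have "0 \<le> V c" unfolding V_def by (rule main_c(2))
    hence Vp: "0 < V c" using V0 by simp
    have FR: "(F c)^2 \<le> R * V c" unfolding F_def V_def R_def by (rule main_c(1))
    have "r^2 = (F c)^2 / V c" using Vp by (simp add: r power_divide)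
    also have "\<dots> \<le> R" using FR Vp by (simp add: pos_divide_le_eq)
    finally show ?thesis .
  qed
  let ?c0 = "\<lambda>e::nat\<Rightarrow>nat. if e = (\<lambda>_. 0) then 1::real else 0"
  have V1: "V ?c0 = 1"
    unfolding V_def joint_exp_def by (simp add: poly_eval_one bern_sum prob_space)
  have r0: "F ?c0 / sqrt (V ?c0) \<in> A" unfolding A_def using V1 by (intro CollectI exI[of _ ?c0]) simp
  have ub: "r \<le> sqrt R" if "r \<in> A" for r using sq[OF that] by (rule real_le_rsqrt)
  have "Sup A \<le> sqrt R" using r0 ub by (intro cSup_least) auto
  moreover have "F ?c0 / sqrt (V ?c0) \<le> Sup A"
    using r0 ub by (intro cSup_upper) (auto intro: bdd_aboveI[of A "sqrt R"])
  moreover have "- (F ?c0 / sqrt (V ?c0)) \<le> sqrt R"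
    using sq[OF r0] by (intro real_le_rsqrt) simp
  ultimately have "\<bar>Sup A\<bar> \<le> sqrt R" by linarith
  hence "\<bar>Sup A\<bar>^2 \<le> (sqrt R)^2" by (intro power_mono) auto
  moreover have "0 \<le> R" using sq[OF r0] by (meson order_trans zero_le_power2)
  ultimately show ?thesis unfolding corr R_def[symmetric] by simp
qed

end
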